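(* Let $\Omega_D := \{x \in \mathbb{R}^2 : |x| \le 1\}$ and $\Omega_S := [-1,1]\times[0,2\pi)$. Let $\mathcal{E} \in C^2(\mathbb{R})$ satisfy $\mathcal{E}(x) = \exp(-x)$ for all $x \ge 0$, with $|\mathcal{E}|$, $|\mathcal{E}'|$ and $|\mathcal{E}''|$ bounded on $\mathbb{R}$. For $w \in L_1(\mathbb{R})$ define $$F(f)(s,\theta) := \int_{\mathbb{R}} w(r-s)\, \mathcal{E}\Big(\tfrac{1}{2}(Rf)(r,\theta)\Big)\, dr, \qquad (s,\theta) \in \Omega_S,$$ for $f \in L_2(\Omega_D)$, where $R$ is the Radon transform. Then $F : L_2(\Omega_D) \to L_2(\Omega_S)$ is well-defined, i.e. $F(f) \in L_2(\Omega_S)$ for every $f \in L_2(\Omega_D)$.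
   Context: Functions $f \in L_2(\Omega_D)$ are extended by zero outside $\Omega_D$. The Radon transform is $(Rf)(s,\theta) = \int_{\mathbb{R}} f(s\,u(\theta) + \sigma\, u(\theta)^\perp)\, d\sigma$ for $s \in \mathbb{R}$, $\theta \in [0,2\pi)$, where $u(\theta) = (\cos\theta, \sin\theta)^T$ and $u(\theta)^\perp$ is the unit vector perpendicular to it. $R$ is a bounded linear operator from $L_2(\Omega_D)$ to $L_2(\mathbb{R}\times[0,2\pi))$ (and to $L_2(\Omega_S)$), and $(Rf)(s,\theta) = 0$ for $|s|>1$. *)

theory Defs
  imports "HOL-Analysis.Analysis"
begin

definition OmegaD :: "(real \<times> real) set" where
  "OmegaD = cball 0 1"

definition OmegaS :: "(real \<times> real) set" where
  "OmegaS = {-1..1} \<times> {0..<2*pi}"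

definition udir :: "real \<Rightarrow> real \<times> real" where
  "udir \<theta> = (cos \<theta>, sin \<theta>)"

definition udir_perp :: "real \<Rightarrow> real \<times> real" where
  "udir_perp \<theta> = (- sin \<theta>, cos \<theta>)"

definition ext0 :: "(real \<times> real \<Rightarrow> real) \<Rightarrow> real \<times> real \<Rightarrow> real" where
  "ext0 f x = indicator OmegaD x * f x"

definition radon :: "(real \<times> real \<Rightarrow> real) \<Rightarrow> real \<Rightarrow> real \<Rightarrow> real" where
  "radon f s \<theta> = (\<integral>\<sigma>. ext0 f (s *\<^sub>R udir \<theta> + \<sigma> *\<^sub>R udir_perp \<theta>) \<partial>lborel)"

definition Fop :: "(real \<Rightarrow> real) \<Rightarrow> (real \<Rightarrow> real) \<Rightarrow> (real \<times> real \<Rightarrow> real) \<Rightarrow> real \<times> real \<Rightarrow> real" where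
  "Fop w E f = (\<lambda>(s, \<theta>). \<integral>r. w (r - s) * E (radon f r \<theta> / 2) \<partial>lborel)"

definition in_L2 :: "(real \<times> real) set \<Rightarrow> (real \<times> real \<Rightarrow> real) \<Rightarrow> bool" where
  "in_L2 \<Omega> g \<longleftrightarrow> set_borel_measurable lborel \<Omega> g \<and> set_integrable lborel \<Omega> (\<lambda>x. (g x)\<^sup>2)"

end

theory Submission
  imports Defs
begin

lemma sets_bl: "sets (borel \<Otimes>\<^sub>M (lborel::real measure)) = sets (borel :: (('a::second_countable_topology) \<times> real) measure)"
  by (metis borel_prod sets_lborel sets_pair_measure_cong)

lemma ext0_meas: assumes "f \<in> borel_measurable borel" shows "ext0 f \<in> borel_measurable borel"
proof -
  have "OmegaD \<in> sets borel" unfolding OmegaD_def by (simp add: borel_closed)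
  then show ?thesis unfolding ext0_def[abs_def] using assms
    by (intro borel_measurable_times borel_measurable_indicator) auto
qed

lemma radon_meas:
  assumes "f \<in> borel_measurable borel"
  shows "(\<lambda>x::real\<times>real. radon f (fst x) (snd x)) \<in> borel_measurable borel"
proof -
  have c: "continuous_on UNIV (\<lambda>y::(real\<times>real)\<times>real. fst (fst y) *\<^sub>R udir (snd (fst y)) + snd y *\<^sub>R udir_perp (snd (fst y)))"
    unfolding udir_def udir_perp_def by (intro continuous_intros)
  have "(\<lambda>y::(real\<times>real)\<times>real. ext0 f (fst (fst y) *\<^sub>R udir (snd (fst y)) + snd y *\<^sub>R udir_perp (snd (fst y)))) \<in> borel_measurable borel"
    using measurable_comp[OF borel_measurable_continuous_onI[OF c] ext0_meas[OF assms]] by (simp add: o_def)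
  then have "case_prod (\<lambda>x \<sigma>. ext0 f (fst x *\<^sub>R udir (snd x) + \<sigma> *\<^sub>R udir_perp (snd x))) \<in> borel_measurable (borel \<Otimes>\<^sub>M lborel)"
    by (subst measurable_cong_sets[OF sets_bl refl]) (simp add: case_prod_beta')
  from lborel.borel_measurable_lebesgue_integral[OF this] show ?thesis
    unfolding radon_def by simp
qed

lemma Fop_meas:
  assumes "f \<in> borel_measurable borel" "w \<in> borel_measurable borel" "E \<in> borel_measurable borel"
  shows "Fop w E f \<in> borel_measurable borel"
proof -
  have R: "(\<lambda>y::(real\<times>real)\<times>real. radon f (snd y) (snd (fst y))) \<in> borel_measurable borel"
    using measurable_comp[OF _ radon_meas[OF assms(1)], of "\<lambda>y. (snd y, snd (fst y))" borel]
    by (simp add: o_def borel_measurable_continuous_onI continuous_intros)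
  have "(\<lambda>y::(real\<times>real)\<times>real. w (snd y - fst (fst y)) * E (radon f (snd y) (snd (fst y)) / 2)) \<in> borel_measurable borel"
  proof (rule borel_measurable_times)
    show "(\<lambda>y::(real\<times>real)\<times>real. w (snd y - fst (fst y))) \<in> borel_measurable borel"
      using measurable_comp[OF borel_measurable_continuous_onI assms(2), of "\<lambda>y::(real\<times>real)\<times>real. snd y - fst (fst y)"]
      by (simp add: o_def continuous_intros)
    show "(\<lambda>y::(real\<times>real)\<times>real. E (radon f (snd y) (snd (fst y)) / 2)) \<in> borel_measurable borel"
      using measurable_comp[OF borel_measurable_divide[OF R borel_measurable_const] assms(3)]
      by (simp add: o_def)
  qed
  then have "case_prod (\<lambda>x r. w (r - fst x) * E (radon f r (snd x) / 2)) \<in> borel_measurable (borel \<Otimes>\<^sub>M lborel)"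
    by (subst measurable_cong_sets[OF sets_bl refl]) (simp add: case_prod_beta')
  from lborel.borel_measurable_lebesgue_integral[OF this] show ?thesis
    unfolding Fop_def by (simp add: case_prod_beta')
qed
lemma Fop_bound:
  assumes w: "integrable lborel w" and B: "\<And>x. \<bar>E x\<bar> \<le> B"
  shows "\<bar>Fop w E f x\<bar> \<le> B * (\<integral>r. \<bar>w r\<bar> \<partial>lborel)"
proof -
  obtain s \<theta> where x: "x = (s, \<theta>)" by (cases x)
  have B0: "0 \<le> B" using B[of 0] by linarith
  have W0: "0 \<le> (\<integral>r. \<bar>w r\<bar> \<partial>lborel)" by simp
  have iw: "integrable lborel (\<lambda>r. \<bar>w (r - s)\<bar>)"
    using lborel_integrable_real_affine[OF integrable_abs[OF w], of 1 "-s"] by simp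
  have eq: "(\<integral>r. \<bar>w r\<bar> \<partial>lborel) = (\<integral>r. \<bar>w (r - s)\<bar> \<partial>lborel)"
    using lborel_integral_real_affine[of 1 "\<lambda>r. \<bar>w r\<bar>" "-s"] by simp
  show ?thesis
  proof (cases "integrable lborel (\<lambda>r. w (r - s) * E (radon f r \<theta> / 2))")
    case True
    have "norm (\<integral>r. w (r - s) * E (radon f r \<theta> / 2) \<partial>lborel) \<le> (\<integral>r. \<bar>w (r - s)\<bar> * B \<partial>lborel)"
      apply (rule Bochner_Integration.integral_norm_bound_integral[OF True integrable_mult_left[OF iw]])
      by (simp add: abs_mult B mult_left_mono)
    also have "\<dots> = B * (\<integral>r. \<bar>w r\<bar> \<partial>lborel)" by (simp add: eq)
    finally show ?thesis by (simp add: x Fop_def)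
  next
    case False
    then show ?thesis using B0 W0 by (simp add: x Fop_def not_integrable_integral_eq)
  qed
qed

theorem proposition1:
  fixes E E' E'' w :: "real \<Rightarrow> real" and f :: "real \<times> real \<Rightarrow> real"
  assumes "\<And>x. (E has_real_derivative E' x) (at x)"
      and "\<And>x. (E' has_real_derivative E'' x) (at x)"
      and "continuous_on UNIV E''"
      and "\<And>x. x \<ge> 0 \<Longrightarrow> E x = exp (- x)"
      and "bounded (range E)" and "bounded (range E')" and "bounded (range E'')"
      and "integrable lborel w"
      and "f \<in> borel_measurable borel"
      and "in_L2 OmegaD f"
  shows "in_L2 OmegaS (Fop w E f)"
proof -
  have cE: "continuous_on UNIV E"
    using assms(1) by (meson DERIV_isCont continuous_at_imp_continuous_on)
  have wm: "w \<in> borel_measurable borel"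
    using borel_measurable_integrable[OF assms(8)] by (simp add: measurable_cong_sets[OF sets_lborel refl])
  have Fm: "Fop w E f \<in> borel_measurable borel"
    by (rule Fop_meas[OF assms(9) wm borel_measurable_continuous_onI[OF cE]])
  then have Fml: "Fop w E f \<in> borel_measurable lborel"
    by (simp add: measurable_cong_sets[OF sets_lborel refl])
  obtain B where B: "\<And>x. \<bar>E x\<bar> \<le> B"
    using assms(5) unfolding bounded_iff by auto
  define C where "C = B * (\<integral>r. \<bar>w r\<bar> \<partial>lborel)"
  have FB: "\<And>x. \<bar>Fop w E f x\<bar> \<le> C" unfolding C_def by (rule Fop_bound[OF assms(8) B])
  have So: "OmegaS \<in> sets borel"
  proof -
    have "{-1..1::real} \<times> {0..<2*pi} \<in> sets (borel \<Otimes>\<^sub>M borel)"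
      by (intro pair_measureI) auto
    then show ?thesis unfolding OmegaS_def borel_prod .
  qed
  then have Sl: "OmegaS \<in> sets lborel" by simp
  have Sb: "bounded OmegaS" unfolding OmegaS_def
    by (intro bounded_Times bounded_closed_interval) (meson bounded_subset bounded_closed_interval atLeastLessThan_subseteq_atLeastAtMost_iff order_refl)
  have "set_borel_measurable lborel OmegaS (Fop w E f)"
    unfolding set_borel_measurable_def using Sl Fml by measurable
  moreover have "set_integrable lborel OmegaS (\<lambda>x. (Fop w E f x)\<^sup>2)"
    unfolding set_integrable_def
  proof (rule integrableI_bounded_set[OF Sl _ emeasure_bounded_finite[OF Sb], where B="C\<^sup>2"])
    show "(\<lambda>x. indicator OmegaS x *\<^sub>R (Fop w E f x)\<^sup>2) \<in> borel_measurable lborel"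
      using Sl Fml by measurable
    show "AE x in lborel. x \<in> OmegaS \<longrightarrow> norm (indicator OmegaS x *\<^sub>R (Fop w E f x)\<^sup>2) \<le> C\<^sup>2"
    proof (intro AE_I2 impI)
      fix x assume "x \<in> OmegaS"
      have "\<bar>Fop w E f x\<bar>\<^sup>2 \<le> C\<^sup>2" using FB[of x] by (intro power_mono) auto
      then show "norm (indicator OmegaS x *\<^sub>R (Fop w E f x)\<^sup>2) \<le> C\<^sup>2"
        using \<open>x \<in> OmegaS\<close> by simp
    qed
    show "AE x in lborel. x \<notin> OmegaS \<longrightarrow> indicator OmegaS x *\<^sub>R (Fop w E f x)\<^sup>2 = 0"
      by (auto intro!: AE_I2)
  qed
  ultimately show ?thesis unfolding in_L2_def by simp
qed
end
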